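(* Let $(X,Y)$ be distributed according to an $(\alpha,\lambda)$-locally consistent RBM with $\alpha>0$. Fix an observed node $u\in V_{obs}$, a subset $S\subseteq V_{obs}\setminus\{u\}$, and a configuration $x_S\in\{\pm1\}^{S}$. Then for every $v\in N_2(u)\setminus(S\cup\{u\})$, \[ \mathrm{Cov}(u,v\mid X_S=x_S)\;\ge\;\alpha^2 e^{-12\lambda}. \]
   Context: A Restricted Boltzmann Machine (RBM) with $n$ observed variables $X\in\{\pm1\}^n$ (indexed by $V_{obs}=[n]$) and $m$ latent variables $Y\in\{\pm1\}^m$ (indexed by $V_{lat}=[m]$) is the distribution $\Pr[X=x,Y=y]=\frac1Z\exp(x^TJy+h^Tx+g^Ty)$, where $J\in\mathbb R^{n\times m}$, $h\in\mathbb R^n$, $g\in\mathbb R^m$ are arbitrary (no sign constraints on $h,g$) and $Z$ is the normalizing constant. Its edge set is $E=\{(i,j):J_{ij}\neq0\}$. The RBM is $(\alpha,\lambda)$-locally consistent if: (i) for each $j\in[m]$, either $J_{ij}\ge0$ for all $i$ or $J_{ij}\le0$ for all $i$; (ii) $|J_{ij}|\ge\alpha$ for every $(i,j)\in E$; (iii) $\sum_j|J_{ij}|+|h_i|\le\lambda$ for all $i\in[n]$; (iv) $\sum_i|J_{ij}|+|g_j|\le\lambda$ for all $j\in[m]$. For an observed node $u$, $N_2(u)=\{i\in V_{obs}:\exists j\in[m],\ J_{ij}\ne0,\ J_{uj}\neq0\}$ (two-hop neighborhood). For observed $u,v$ and $S\subseteq V_{obs}\setminus\{u,v\}$ with configuration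 $x_S$ of positive probability, $\mathrm{Cov}(u,v\mid X_S=x_S)=\mathbb E[X_uX_v\mid X_S=x_S]-\mathbb E[X_u\mid X_S=x_S]\,\mathbb E[X_v\mid X_S=x_S]$. *)

theory Defs
  imports Main "HOL-Library.FuncSet" Complex_Main
begin

text \<open>RBM with n observed nodes 0..<n and m latent nodes 0..<m.
  Configurations are extensional functions on the index sets with values in {-1,1}.\<close>

definition spins :: "nat \<Rightarrow> (nat \<Rightarrow> real) set" where
  "spins k = (\<Pi>\<^sub>E i\<in>{..<k}. {-1, 1})"

definition rbm_weight ::
  "nat \<Rightarrow> nat \<Rightarrow> (nat \<Rightarrow> nat \<Rightarrow> real) \<Rightarrow> (nat \<Rightarrow> real) \<Rightarrow> (nat \<Rightarrow> real)
   \<Rightarrow> (nat \<Rightarrow> real) \<Rightarrow> (nat \<Rightarrow> real) \<Rightarrow> real" where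
  "rbm_weight n m J h g x y =
     exp ((\<Sum>i<n. \<Sum>j<m. x i * J i j * y j) + (\<Sum>i<n. h i * x i) + (\<Sum>j<m. g j * y j))"

definition rbm_Z ::
  "nat \<Rightarrow> nat \<Rightarrow> (nat \<Rightarrow> nat \<Rightarrow> real) \<Rightarrow> (nat \<Rightarrow> real) \<Rightarrow> (nat \<Rightarrow> real) \<Rightarrow> real" where
  "rbm_Z n m J h g = (\<Sum>x\<in>spins n. \<Sum>y\<in>spins m. rbm_weight n m J h g x y)"

definition rbm_prob ::
  "nat \<Rightarrow> nat \<Rightarrow> (nat \<Rightarrow> nat \<Rightarrow> real) \<Rightarrow> (nat \<Rightarrow> real) \<Rightarrow> (nat \<Rightarrow> real)
   \<Rightarrow> (nat \<Rightarrow> real) \<Rightarrow> (nat \<Rightarrow> real) \<Rightarrow> real" where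
  "rbm_prob n m J h g x y = rbm_weight n m J h g x y / rbm_Z n m J h g"

definition rbm_cond_exp ::
  "nat \<Rightarrow> nat \<Rightarrow> (nat \<Rightarrow> nat \<Rightarrow> real) \<Rightarrow> (nat \<Rightarrow> real) \<Rightarrow> (nat \<Rightarrow> real)
   \<Rightarrow> nat set \<Rightarrow> (nat \<Rightarrow> real) \<Rightarrow> ((nat \<Rightarrow> real) \<Rightarrow> real) \<Rightarrow> real" where
  "rbm_cond_exp n m J h g S xS f =
     (\<Sum>x\<in>{x\<in>spins n. \<forall>i\<in>S. x i = xS i}. \<Sum>y\<in>spins m. f x * rbm_prob n m J h g x y)
     / (\<Sum>x\<in>{x\<in>spins n. \<forall>i\<in>S. x i = xS i}. \<Sum>y\<in>spins m. rbm_prob n m J h g x y)"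

definition rbm_cond_cov ::
  "nat \<Rightarrow> nat \<Rightarrow> (nat \<Rightarrow> nat \<Rightarrow> real) \<Rightarrow> (nat \<Rightarrow> real) \<Rightarrow> (nat \<Rightarrow> real)
   \<Rightarrow> nat set \<Rightarrow> (nat \<Rightarrow> real) \<Rightarrow> nat \<Rightarrow> nat \<Rightarrow> real" where
  "rbm_cond_cov n m J h g S xS u v =
     rbm_cond_exp n m J h g S xS (\<lambda>x. x u * x v)
     - rbm_cond_exp n m J h g S xS (\<lambda>x. x u) * rbm_cond_exp n m J h g S xS (\<lambda>x. x v)"

definition locally_consistent ::
  "nat \<Rightarrow> nat \<Rightarrow> (nat \<Rightarrow> nat \<Rightarrow> real) \<Rightarrow> (nat \<Rightarrow> real) \<Rightarrow> (nat \<Rightarrow> real)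
   \<Rightarrow> real \<Rightarrow> real \<Rightarrow> bool" where
  "locally_consistent n m J h g a lam \<longleftrightarrow>
     (\<forall>j<m. (\<forall>i<n. J i j \<ge> 0) \<or> (\<forall>i<n. J i j \<le> 0)) \<and>
     (\<forall>i<n. \<forall>j<m. J i j \<noteq> 0 \<longrightarrow> \<bar>J i j\<bar> \<ge> a) \<and>
     (\<forall>i<n. (\<Sum>j<m. \<bar>J i j\<bar>) + \<bar>h i\<bar> \<le> lam) \<and>
     (\<forall>j<m. (\<Sum>i<n. \<bar>J i j\<bar>) + \<bar>g j\<bar> \<le> lam)"

definition two_hop :: "nat \<Rightarrow> nat \<Rightarrow> (nat \<Rightarrow> nat \<Rightarrow> real) \<Rightarrow> nat \<Rightarrow> nat set" where
  "two_hop n m J u = {i. i < n \<and> (\<exists>j<m. J i j \<noteq> 0 \<and> J u j \<noteq> 0)}"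

end

theory Submission
  imports Defs
begin


definition nu :: "('a set \<Rightarrow> real) \<Rightarrow> 'a \<Rightarrow> 'a set \<Rightarrow> real" where
  "nu \<mu> k A = \<mu> A + \<mu> (insert k A)"
definition cnd :: "('a set \<Rightarrow> real) \<Rightarrow> 'a \<Rightarrow> ('a set \<Rightarrow> real) \<Rightarrow> 'a set \<Rightarrow> real" where
  "cnd \<mu> k f A = (\<mu> A * f A + \<mu> (insert k A) * f (insert k A)) / nu \<mu> k A"
definition cv :: "('a set \<Rightarrow> real) \<Rightarrow> 'a set \<Rightarrow> ('a set \<Rightarrow> real) \<Rightarrow> ('a set \<Rightarrow> real) \<Rightarrow> real" where
  "cv \<mu> I f g = (\<Sum>A\<in>Pow I. \<mu> A) * (\<Sum>A\<in>Pow I. \<mu> A * f A * g A)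
     - (\<Sum>A\<in>Pow I. \<mu> A * f A) * (\<Sum>A\<in>Pow I. \<mu> A * g A)"
definition lsm :: "('a set \<Rightarrow> real) \<Rightarrow> 'a set \<Rightarrow> bool" where
  "lsm \<mu> I \<longleftrightarrow> (\<forall>A B. A \<subseteq> I \<longrightarrow> B \<subseteq> I \<longrightarrow> \<mu> A * \<mu> B \<le> \<mu> (A \<union> B) * \<mu> (A \<inter> B))"
definition monof :: "('a set \<Rightarrow> real) \<Rightarrow> 'a set \<Rightarrow> bool" where
  "monof f I \<longleftrightarrow> (\<forall>A B. A \<subseteq> B \<longrightarrow> B \<subseteq> I \<longrightarrow> f A \<le> f B)"
definition posm :: "('a set \<Rightarrow> real) \<Rightarrow> 'a set \<Rightarrow> bool" where
  "posm \<mu> I \<longleftrightarrow> (\<forall>A. A \<subseteq> I \<longrightarrow> \<mu> A > 0)"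

lemma sum_Pow_insert:
  assumes "finite I" "k \<notin> I"
  shows "(\<Sum>A\<in>Pow (insert k I). \<phi> A) = (\<Sum>A\<in>Pow I. \<phi> A + \<phi> (insert k A))"
proof -
  have inj: "inj_on (insert k) (Pow I)"
    using assms(2) by (auto simp: inj_on_def)
  have dis: "Pow I \<inter> insert k ` Pow I = {}" using assms(2) by auto
  have "(\<Sum>A\<in>Pow (insert k I). \<phi> A) = (\<Sum>A\<in>Pow I. \<phi> A) + (\<Sum>A\<in>insert k ` Pow I. \<phi> A)"
    unfolding Pow_insert using assms(1) dis by (intro sum.union_disjoint) auto
  also have "(\<Sum>A\<in>insert k ` Pow I. \<phi> A) = (\<Sum>A\<in>Pow I. \<phi> (insert k A))"
    using sum.reindex[OF inj] by simp
  finally show ?thesis by (simp add: sum.distrib)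
qed

lemma nu_pos:
  assumes "posm \<mu> (insert k I)" shows "posm (nu \<mu> k) I"
  using assms unfolding posm_def nu_def
  by (metis add_pos_pos insert_mono subset_insertI2)

lemma alg1:
  fixes a b x x' y y' :: real assumes "a + b > 0"
  shows "a*x*y + b*x'*y' = (a+b)*((a*x+b*x')/(a+b))*((a*y+b*y')/(a+b)) + a*b*(x'-x)*(y'-y)/(a+b)"
proof -
  have "(a+b)*((a*x+b*x')/(a+b))*((a*y+b*y')/(a+b)) = (a*x+b*x')*(a*y+b*y')/(a+b)"
  proof -
    have "(a+b)*((a*x+b*x')/(a+b)) = a*x+b*x'" using assms by simp
    then show ?thesis by simp
  qed
  moreover have "a*x*y + b*x'*y' = ((a*x+b*x')*(a*y+b*y') + a*b*(x'-x)*(y'-y))/(a+b)"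
    using assms by (simp add: field_simps)
  ultimately show ?thesis by (simp add: add_divide_distrib)
qed

lemma cov_peel:
  assumes "finite I" "k \<notin> I" "posm \<mu> (insert k I)"
  shows "cv \<mu> (insert k I) f g = cv (nu \<mu> k) I (cnd \<mu> k f) (cnd \<mu> k g)
    + (\<Sum>A\<in>Pow I. nu \<mu> k A) * (\<Sum>A\<in>Pow I. \<mu> A * \<mu> (insert k A) * (f (insert k A) - f A)
        * (g (insert k A) - g A) / nu \<mu> k A)"
proof -
  have p: "nu \<mu> k A > 0" if "A \<in> Pow I" for A using nu_pos[OF assms(3)] that unfolding posm_def by auto
  have e1: "nu \<mu> k A * cnd \<mu> k f A = \<mu> A * f A + \<mu> (insert k A) * f (insert k A)" if "A \<in> Pow I" for A f
    using p[OF that] unfolding cnd_def by simp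
  have e2: "\<mu> A * f A * g A + \<mu> (insert k A) * f (insert k A) * g (insert k A) =
     nu \<mu> k A * cnd \<mu> k f A * cnd \<mu> k g A + \<mu> A * \<mu> (insert k A) * (f (insert k A) - f A)
        * (g (insert k A) - g A) / nu \<mu> k A" if "A \<in> Pow I" for A
    using alg1[of "\<mu> A" "\<mu> (insert k A)"] p[OF that] unfolding cnd_def nu_def by simp
  have s0: "(\<Sum>A\<in>Pow I. \<mu> A + \<mu> (insert k A)) = (\<Sum>A\<in>Pow I. nu \<mu> k A)"
    unfolding nu_def ..
  have s1: "(\<Sum>A\<in>Pow I. \<mu> A * h A + \<mu> (insert k A) * h (insert k A)) = (\<Sum>A\<in>Pow I. nu \<mu> k A * cnd \<mu> k h A)" for h
    using e1 by (intro sum.cong) auto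
  have s2: "(\<Sum>A\<in>Pow I. \<mu> A * f A * g A + \<mu> (insert k A) * f (insert k A) * g (insert k A))
    = (\<Sum>A\<in>Pow I. nu \<mu> k A * cnd \<mu> k f A * cnd \<mu> k g A) + (\<Sum>A\<in>Pow I. \<mu> A * \<mu> (insert k A) * (f (insert k A) - f A)
        * (g (insert k A) - g A) / nu \<mu> k A)"
    unfolding sum.distrib[symmetric] using e2 by (intro sum.cong) auto
  show ?thesis
    unfolding cv_def sum_Pow_insert[OF assms(1,2)] s0 s1 s2 by (simp add: algebra_simps)
qed

lemma four_fn:
  fixes a b c d p q r s :: real
  assumes pos: "a > 0" "b > 0" "c > 0" "d > 0" "p > 0" "q > 0" "r > 0" "s > 0"
    and h1: "p*r \<le> a*c" and h2: "q*s \<le> b*d" and h3: "p*s \<le> a*d" and h4: "q*r \<le> a*d"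
  shows "(q+p)*(s+r) \<le> (b+a)*(d+c)"
proof -
  have "(p*r)*(q*s) \<le> (a*c)*(b*d)"
    by (rule mult_mono[OF h1 h2]) (use pos in auto)
  hence XY: "(p*s)*(q*r) \<le> (a*d)*(b*c)" by (simp add: algebra_simps)
  have "0 \<le> (a*d - p*s)*(a*d - q*r)" using h3 h4 by simp
  hence "(a*d)*(p*s + q*r) \<le> (a*d)*(a*d) + (p*s)*(q*r)" by (simp add: algebra_simps)
  also have "\<dots> \<le> (a*d)*(a*d) + (a*d)*(b*c)" using XY by simp
  finally have "(a*d)*(p*s + q*r) \<le> (a*d)*(a*d + b*c)" by (simp add: algebra_simps)
  hence "p*s + q*r \<le> a*d + b*c" using pos by (simp add: mult_le_cancel_left)
  thus ?thesis using h1 h2 by (simp add: algebra_simps)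
qed

lemma lsm_nu:
  assumes "k \<notin> I" "posm \<mu> (insert k I)" "lsm \<mu> (insert k I)"
  shows "lsm (nu \<mu> k) I"
  unfolding lsm_def
proof (intro allI impI)
  fix A B assume A: "A \<subseteq> I" and B: "B \<subseteq> I"
  have kA: "k \<notin> A" and kB: "k \<notin> B" using A B assms(1) by auto
  have P: "\<And>C. C \<subseteq> insert k I \<Longrightarrow> \<mu> C > 0" using assms(2) unfolding posm_def by auto
  have L: "\<And>C D. C \<subseteq> insert k I \<Longrightarrow> D \<subseteq> insert k I \<Longrightarrow> \<mu> C * \<mu> D \<le> \<mu> (C \<union> D) * \<mu> (C \<inter> D)"
    using assms(3) unfolding lsm_def by auto
  have h1: "\<mu> (insert k A) * \<mu> (insert k B) \<le> \<mu> (insert k (A \<union> B)) * \<mu> (insert k (A \<inter> B))"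
    using L[of "insert k A" "insert k B"] A B by auto
  have h2: "\<mu> A * \<mu> B \<le> \<mu> (A \<union> B) * \<mu> (A \<inter> B)"
    using L[of A B] A B by auto
  have e3: "insert k A \<inter> B = A \<inter> B" using kB by auto
  have h3: "\<mu> (insert k A) * \<mu> B \<le> \<mu> (insert k (A \<union> B)) * \<mu> (A \<inter> B)"
    using L[of "insert k A" B] A B e3 by auto
  have e4: "A \<inter> insert k B = A \<inter> B" using kA by auto
  have h4: "\<mu> A * \<mu> (insert k B) \<le> \<mu> (insert k (A \<union> B)) * \<mu> (A \<inter> B)"
    using L[of A "insert k B"] A B e4 by auto
  show "nu \<mu> k A * nu \<mu> k B \<le> nu \<mu> k (A \<union> B) * nu \<mu> k (A \<inter> B)"
    unfolding nu_def
    by (rule four_fn[OF P P P P P P P P h1 h2 h3 h4]) (use A B in auto)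
qed

lemma mono_cnd:
  assumes "k \<notin> I" "posm \<mu> (insert k I)" "lsm \<mu> (insert k I)" "monof f (insert k I)"
  shows "monof (cnd \<mu> k f) I"
  unfolding monof_def
proof (intro allI impI)
  fix A B assume AB: "A \<subseteq> B" and B: "B \<subseteq> I"
  have kB: "k \<notin> B" using B assms(1) by auto
  have P: "\<And>C. C \<subseteq> insert k I \<Longrightarrow> \<mu> C > 0" using assms(2) unfolding posm_def by auto
  have M: "\<And>C D. C \<subseteq> D \<Longrightarrow> D \<subseteq> insert k I \<Longrightarrow> f C \<le> f D"
    using assms(4) unfolding monof_def by auto
  define a0 a1 b0 b1 where "a0 = \<mu> A" "a1 = \<mu> (insert k A)" "b0 = \<mu> B" "b1 = \<mu> (insert k B)"
  have pos: "a0 > 0" "a1 > 0" "b0 > 0" "b1 > 0" unfolding a0_a1_b0_b1_def using AB B by (auto intro!: P)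
  have "a1 * b0 \<le> \<mu> (insert k A \<union> B) * \<mu> (insert k A \<inter> B)"
  proof -
    have "insert k A \<subseteq> insert k I" "B \<subseteq> insert k I" using AB B by auto
    thus ?thesis unfolding a0_a1_b0_b1_def using assms(3) unfolding lsm_def by blast
  qed
  also have "insert k A \<union> B = insert k B" using AB by auto
  also have "insert k A \<inter> B = A" using AB kB by auto
  finally have R: "a1 * b0 \<le> b1 * a0" unfolding a0_a1_b0_b1_def by (simp add: mult.commute)
  define x y where "x = f B" "y = f (insert k B)"
  have xy: "x \<le> y" unfolding x_y_def using B by (intro M) auto
  have fA: "f A \<le> x" and fkA: "f (insert k A) \<le> y" unfolding x_y_def using AB B by (auto intro!: M)
  have "cnd \<mu> k f A = (a0 * f A + a1 * f (insert k A)) / (a0 + a1)"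
    unfolding cnd_def nu_def a0_a1_b0_b1_def ..
  also have "\<dots> \<le> (a0 * x + a1 * y) / (a0 + a1)"
    using pos fA fkA by (intro divide_right_mono add_mono mult_left_mono) auto
  also have "\<dots> \<le> (b0 * x + b1 * y) / (b0 + b1)"
  proof -
    have "(a0 * x + a1 * y) * (b0 + b1) \<le> (b0 * x + b1 * y) * (a0 + a1)"
    proof -
      have "0 \<le> (b1 * a0 - a1 * b0) * (y - x)" using R xy by simp
      thus ?thesis by (simp add: algebra_simps)
    qed
    thus ?thesis using pos by (simp add: divide_simps)
  qed
  also have "\<dots> = cnd \<mu> k f B"
    unfolding cnd_def nu_def a0_a1_b0_b1_def x_y_def ..
  finally show "cnd \<mu> k f A \<le> cnd \<mu> k f B" .
qed

lemma cov_peel_ge: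
  assumes "finite I" "k \<notin> I" "posm \<mu> (insert k I)" "monof f (insert k I)" "monof g (insert k I)"
  shows "cv (nu \<mu> k) I (cnd \<mu> k f) (cnd \<mu> k g) \<le> cv \<mu> (insert k I) f g"
proof -
  have P: "\<And>C. C \<subseteq> insert k I \<Longrightarrow> \<mu> C > 0" using assms(3) unfolding posm_def by auto
  have "0 \<le> (\<Sum>A\<in>Pow I. nu \<mu> k A) * (\<Sum>A\<in>Pow I. \<mu> A * \<mu> (insert k A) * (f (insert k A) - f A)
        * (g (insert k A) - g A) / nu \<mu> k A)"
  proof (intro mult_nonneg_nonneg sum_nonneg)
    fix A assume A: "A \<in> Pow I"
    have p1: "\<mu> A > 0" "\<mu> (insert k A) > 0" using A by (auto intro!: P)
    have "f A \<le> f (insert k A)" "g A \<le> g (insert k A)"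
      using assms(4,5) A unfolding monof_def by (meson Pow_iff insert_mono subset_insertI)+
    thus "0 \<le> \<mu> A * \<mu> (insert k A) * (f (insert k A) - f A) * (g (insert k A) - g A) / nu \<mu> k A"
      using p1 unfolding nu_def by simp
    show "0 \<le> nu \<mu> k A" using p1 unfolding nu_def by simp
  qed
  thus ?thesis using cov_peel[OF assms(1,2,3), of f g] by simp
qed

lemma fkg:
  assumes "finite I"
  shows "posm \<mu> I \<Longrightarrow> lsm \<mu> I \<Longrightarrow> monof f I \<Longrightarrow> monof g I \<Longrightarrow> 0 \<le> cv \<mu> I f g"
  using assms
proof (induction I arbitrary: \<mu> f g rule: finite_induct)
  case empty
  show ?case by (simp add: cv_def)
next
  case (insert k I)
  have "0 \<le> cv (nu \<mu> k) I (cnd \<mu> k f) (cnd \<mu> k g)"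
    using insert by (intro insert.IH nu_pos lsm_nu mono_cnd) auto
  also have "\<dots> \<le> cv \<mu> (insert k I) f g"
    using insert by (intro cov_peel_ge) auto
  finally show ?case .
qed



lemma L1:
  fixes x y R :: real
  assumes "x > 0" "y > 0" "R \<ge> 1" "x \<le> R * y" "y \<le> R * x"
  shows "(x + y)^2 \<le> 4 * R * (x * y)"
proof -
  have "0 \<le> (R*y - x) * (R*x - y)" using assms by simp
  hence a: "R * (x*x + y*y) \<le> (R*R + 1) * (x*y)" by (simp add: algebra_simps)
  have "R * (x+y)^2 = R*(x*x+y*y) + 2*R*(x*y)" by (simp add: power2_eq_square algebra_simps)
  also have "\<dots> \<le> (R*R + 1 + 2*R) * (x*y)" using a by (simp add: algebra_simps)
  also have "\<dots> \<le> (4*R*R) * (x*y)"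
  proof (rule mult_right_mono)
    have "0 \<le> (R - 1) * (3*R + 1)" using assms by simp
    thus "R*R + 1 + 2*R \<le> 4*R*R" by (simp add: algebra_simps)
    show "0 \<le> x*y" using assms by simp
  qed
  finally have "R * (x+y)^2 \<le> R * (4 * R * (x*y))" by (simp add: algebra_simps)
  thus ?thesis using assms by (simp add: mult_le_cancel_left)
qed

lemma dF:
  fixes r0 r1 a l :: real
  assumes "r0 > 0" "r1 > 0" "exp (4*a) * r0 \<le> r1" "exp (-(2*l)) \<le> r0" "r1 \<le> exp (2*l)" "a > 0" "l \<ge> 0"
  shows "2 * a * exp (-(4*l)) \<le> (r1 - 1)/(r1 + 1) - (r0 - 1)/(r0 + 1)"
proof -
  define E where "E = exp (2*l)"
  have E1: "E \<ge> 1" unfolding E_def using assms by simp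
  have e4: "exp (-(4*l)) = 1 / (E*E)" unfolding E_def by (simp add: exp_minus exp_add[symmetric] inverse_eq_divide)
  have e2: "exp (-(2*l)) = 1 / E" unfolding E_def by (simp add: exp_minus inverse_eq_divide)
  have "1 + 4*a \<le> exp (4*a)" by (rule exp_ge_add_one_self)
  hence "(1 + 4*a) * r0 \<le> exp (4*a) * r0" using assms(1) by (intro mult_right_mono) auto
  hence "(1 + 4*a) * r0 \<le> r1" using assms(3) by linarith
  hence d: "4*a*r0 \<le> r1 - r0" by (simp add: algebra_simps)
  have diff: "(r1 - 1)/(r1 + 1) - (r0 - 1)/(r0 + 1) = 2*(r1 - r0)/((r1+1)*(r0+1))"
    using assms by (simp add: field_simps)
  have r0E: "1 \<le> E * r0"
  proof -
    have "E * (1/E) \<le> E * r0" using assms(4) e2 E1 by (intro mult_left_mono) auto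
    thus ?thesis using E1 by simp
  qed
  have "(r1+1)*(r0+1) \<le> (2*E)*(r0+1)"
    using assms E1 unfolding E_def by (intro mult_right_mono) (auto simp del: exp_le_one_iff one_le_exp_iff)
  also have "\<dots> \<le> E*E*(4*r0)"
  proof -
    have "2*E*(r0+1) = 2*E*r0 + 2*E" by (simp add: algebra_simps)
    also have "\<dots> \<le> 2*E*E*r0 + 2*E*(E*r0)"
      using E1 r0E assms(1) by (intro add_mono) (simp_all add: mult_right_mono mult_left_mono)
    finally show ?thesis by (simp add: algebra_simps)
  qed
  finally have q: "(r1+1)*(r0+1) \<le> E*E*(4*r0)" .
  have pq: "(r1+1)*(r0+1) > 0" using assms by simp
  have "2 * a * exp (-(4*l)) = 2*a/(E*E)" using e4 by simp
  also have "\<dots> \<le> 2*(4*a*r0)/((r1+1)*(r0+1))"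
  proof -
    have "2*a*((r1+1)*(r0+1)) \<le> 2*a*(E*E*(4*r0))" using q assms by (intro mult_left_mono) auto
    thus ?thesis using pq E1 by (simp add: divide_simps)
  qed
  also have "\<dots> \<le> 2*(r1 - r0)/((r1+1)*(r0+1))"
    using d pq by (intro divide_right_mono) auto
  finally show ?thesis using diff by simp
qed

lemma Pform:
  fixes x0 x1 y0 y1 :: real
  assumes "x0 > 0" "y0 > 0" "x1 > 0" "y1 * x0 = x1 * y0"
  shows "(x1 + y1 - x0 - y0) / (x0 + x1 + y0 + y1) = (x1/x0 - 1)/(x1/x0 + 1)"
proof -
  have y1: "y1 = x1/x0 * y0" using assms by (simp add: field_simps)
  have "x0 + x1 + y0 + y1 = (x0 + y0) * (x1/x0 + 1)" unfolding y1 using assms by (simp add: field_simps)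
  moreover have "x1 + y1 - x0 - y0 = (x0 + y0) * (x1/x0 - 1)" unfolding y1 using assms by (simp add: field_simps)
  ultimately show ?thesis using assms by simp
qed

lemma local_bound:
  fixes w000 w100 w010 w110 w001 w101 w011 w111 a l :: real
  assumes pos: "w000 > 0" "w100 > 0" "w010 > 0" "w110 > 0" "w001 > 0" "w101 > 0" "w011 > 0" "w111 > 0"
    and al: "a > 0" "l \<ge> 0"
    and f1: "w110 * w000 = w100 * w010" "w111 * w001 = w101 * w011"
    and iu: "exp (4*a) * (w100 * w001) \<le> w101 * w000"
    and iv: "exp (4*a) * (w010 * w001) \<le> w011 * w000"
    and fu: "w000 \<le> exp (2*l) * w100" "w101 \<le> exp (2*l) * w001"
    and fv: "w000 \<le> exp (2*l) * w010" "w011 \<le> exp (2*l) * w001"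
    and fc: "w001 \<le> exp (2*l) * w000" "w000 \<le> exp (2*l) * w001"
            "w101 \<le> exp (2*l) * w100" "w100 \<le> exp (2*l) * w101"
            "w011 \<le> exp (2*l) * w010" "w010 \<le> exp (2*l) * w011"
            "w111 \<le> exp (2*l) * w110" "w110 \<le> exp (2*l) * w111"
  defines "N0 \<equiv> w000 + w100 + w010 + w110" and "N1 \<equiv> w001 + w101 + w011 + w111"
  shows "a^2 * exp (-(12*l)) * (N0 + N1) \<le>
    N0 * N1 * ((w101 + w111 - w001 - w011) / N1 - (w100 + w110 - w000 - w010) / N0)
      * ((w011 + w111 - w001 - w101) / N1 - (w010 + w110 - w000 - w100) / N0) / (N0 + N1)"
proof -
  define E where "E = exp (2*l)"
  have E1: "E \<ge> 1" unfolding E_def using al by simp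
  have Ep: "E > 0" unfolding E_def by simp
  have N0p: "N0 > 0" and N1p: "N1 > 0" unfolding N0_def N1_def using pos by auto
  have P0: "(w100 + w110 - w000 - w010) / N0 = (w100/w000 - 1)/(w100/w000 + 1)"
    unfolding N0_def using Pform[of w000 w010 w100 w110] pos f1 by (simp add: algebra_simps)
  have P1: "(w101 + w111 - w001 - w011) / N1 = (w101/w001 - 1)/(w101/w001 + 1)"
    unfolding N1_def using Pform[of w001 w011 w101 w111] pos f1 by (simp add: algebra_simps)
  have Q0: "(w010 + w110 - w000 - w100) / N0 = (w010/w000 - 1)/(w010/w000 + 1)"
    unfolding N0_def using Pform[of w000 w100 w010 w110] pos f1 by (simp add: algebra_simps)
  have Q1: "(w011 + w111 - w001 - w101) / N1 = (w011/w001 - 1)/(w011/w001 + 1)"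
    unfolding N1_def using Pform[of w001 w101 w011 w111] pos f1 by (simp add: algebra_simps)
  have em: "exp (-(2*l)) = 1/E" unfolding E_def by (simp add: exp_minus inverse_eq_divide)
  have dP: "2 * a * exp (-(4*l)) \<le> (w101/w001 - 1)/(w101/w001 + 1) - (w100/w000 - 1)/(w100/w000 + 1)"
  proof (rule dF)
    show "exp (4*a) * (w100/w000) \<le> w101/w001" using iu pos by (simp add: field_simps)
    show "exp (-(2*l)) \<le> w100/w000"
    proof -
      have "w000 / E \<le> w100" using fu(1) Ep unfolding E_def[symmetric] by (simp add: field_simps)
      thus ?thesis unfolding em using pos by (simp add: field_simps)
    qed
    show "w101/w001 \<le> exp (2*l)" using fu(2) pos by (simp add: field_simps)
  qed (use pos al in auto)
  have dQ: "2 * a * exp (-(4*l)) \<le> (w011/w001 - 1)/(w011/w001 + 1) - (w010/w000 - 1)/(w010/w000 + 1)"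
  proof (rule dF)
    show "exp (4*a) * (w010/w000) \<le> w011/w001" using iv pos by (simp add: field_simps)
    show "exp (-(2*l)) \<le> w010/w000"
    proof -
      have "w000 / E \<le> w010" using fv(1) Ep unfolding E_def[symmetric] by (simp add: field_simps)
      thus ?thesis unfolding em using pos by (simp add: field_simps)
    qed
    show "w011/w001 \<le> exp (2*l)" using fv(2) pos by (simp add: field_simps)
  qed (use pos al in auto)
  have c1: "N1 \<le> E * N0" unfolding N0_def N1_def E_def using fc by (simp add: algebra_simps)
  have c2: "N0 \<le> E * N1" unfolding N0_def N1_def E_def using fc by (simp add: algebra_simps)
  have sq: "(N0 + N1)^2 \<le> 4 * E * (N0 * N1)" using L1[OF N0p N1p E1 c2 c1] .
  define D where "D = 2 * a * exp (-(4*l))"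
  have Dp: "D > 0" unfolding D_def using al by simp
  have DD: "D * D = 4 * a^2 * exp (-(8*l))" unfolding D_def
    by (simp add: power2_eq_square algebra_simps exp_add[symmetric])
  have "N0 * N1 * D * D \<le> N0 * N1 * ((w101/w001 - 1)/(w101/w001 + 1) - (w100/w000 - 1)/(w100/w000 + 1))
        * ((w011/w001 - 1)/(w011/w001 + 1) - (w010/w000 - 1)/(w010/w000 + 1))"
    using dP dQ Dp N0p N1p unfolding D_def[symmetric]
    by (intro mult_mono mult_left_mono) (auto intro: order.trans[OF less_imp_le[OF Dp]])
  hence main: "N0 * N1 * D * D / (N0 + N1) \<le> N0 * N1 * ((w101 + w111 - w001 - w011) / N1 - (w100 + w110 - w000 - w010) / N0)
      * ((w011 + w111 - w001 - w101) / N1 - (w010 + w110 - w000 - w100) / N0) / (N0 + N1)"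
    unfolding P0 P1 Q0 Q1 using N0p N1p by (intro divide_right_mono) auto
  have "a^2 * exp (-(12*l)) * (N0 + N1) \<le> a^2 * exp (-(10*l)) * (N0 + N1)"
    using al N0p N1p by (intro mult_right_mono mult_left_mono) auto
  also have "a^2 * exp (-(10*l)) * (N0 + N1) = (N0+N1)^2 / (4*E) * (D*D) / (N0+N1)"
  proof -
    have x: "exp (-(10*l)) = exp(-(8*l)) / E" unfolding E_def by (simp add: exp_diff[symmetric])
    have g: "\<And>X S. S > 0 \<Longrightarrow> a^2 * (X / E) * S = S^2 / (4*E) * (4 * a^2 * X) / S"
      using Ep by (simp add: field_simps power2_eq_square)
    show ?thesis unfolding DD x by (rule g) (use N0p N1p in simp)
  qed
  also have "\<dots> \<le> N0 * N1 * (D*D) / (N0+N1)"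
  proof -
    have "(N0+N1)^2 / (4*E) \<le> N0 * N1" using sq Ep by (simp add: divide_simps mult.commute)
    thus ?thesis using N0p N1p by (intro divide_right_mono mult_right_mono) auto
  qed
  also have "\<dots> = N0 * N1 * D * D / (N0 + N1)" by (simp add: algebra_simps)
  finally show ?thesis using main by linarith
qed



definition sl :: "nat \<Rightarrow> (nat \<Rightarrow> nat \<Rightarrow> real) \<Rightarrow> nat \<Rightarrow> real" where
  "sl n J j = (if \<forall>i<n. J i j \<ge> 0 then 1 else -1)"
definition Kc :: "nat \<Rightarrow> (nat \<Rightarrow> nat \<Rightarrow> real) \<Rightarrow> nat \<Rightarrow> nat \<Rightarrow> real" where
  "Kc n J i j = J i j * sl n J j"
definition sig :: "nat set \<Rightarrow> (nat \<Rightarrow> real) \<Rightarrow> (nat + nat) set \<Rightarrow> nat \<Rightarrow> real" where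
  "sig S xS A i = (if i \<in> S then xS i else if Inl i \<in> A then 1 else -1)"
definition tau :: "(nat + nat) set \<Rightarrow> nat \<Rightarrow> real" where
  "tau A j = (if Inr j \<in> A then 1 else -1)"
definition En where
  "En n m J h g S xS A = (\<Sum>i<n. \<Sum>j<m. Kc n J i j * (sig S xS A i * tau A j))
     + (\<Sum>i<n. h i * sig S xS A i) + (\<Sum>j<m. g j * sl n J j * tau A j)"

lemma En_diff:
  "En n m J h g S xS A1 - En n m J h g S xS A2 =
    (\<Sum>i<n. \<Sum>j<m. Kc n J i j * (sig S xS A1 i * tau A1 j - sig S xS A2 i * tau A2 j))
     + (\<Sum>i<n. h i * (sig S xS A1 i - sig S xS A2 i)) + (\<Sum>j<m. g j * sl n J j * (tau A1 j - tau A2 j))"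
  unfolding En_def by (simp add: sum_subtractf right_diff_distrib)

lemma En_four:
  "En n m J h g S xS A1 + En n m J h g S xS A2 - En n m J h g S xS A3 - En n m J h g S xS A4 =
    (\<Sum>i<n. \<Sum>j<m. Kc n J i j * (sig S xS A1 i * tau A1 j + sig S xS A2 i * tau A2 j
        - sig S xS A3 i * tau A3 j - sig S xS A4 i * tau A4 j))
     + (\<Sum>i<n. h i * (sig S xS A1 i + sig S xS A2 i - sig S xS A3 i - sig S xS A4 i))
     + (\<Sum>j<m. g j * sl n J j * (tau A1 j + tau A2 j - tau A3 j - tau A4 j))"
  unfolding En_def by (simp add: sum_subtractf sum.distrib distrib_left right_diff_distrib)


lemma Kc_nonneg:
  assumes "\<forall>j<m. (\<forall>i<n. J i j \<ge> 0) \<or> (\<forall>i<n. J i j \<le> 0)" "i < n" "j < m"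
  shows "Kc n J i j \<ge> 0"
  using assms unfolding Kc_def sl_def by (auto simp: mult_nonpos_nonpos)

lemma abs_Kc: "\<bar>Kc n J i j\<bar> = \<bar>J i j\<bar>"
  unfolding Kc_def sl_def by (simp add: abs_mult)

lemma term_lsm:
  "0 \<le> sig S xS (A\<union>B) i * tau (A\<union>B) j + sig S xS (A\<inter>B) i * tau (A\<inter>B) j - sig S xS A i * tau A j - sig S xS B i * tau B j"
  by (cases "i\<in>S"; cases "Inl i \<in> A"; cases "Inl i \<in> B"; cases "Inr j \<in> A"; cases "Inr j \<in> B")
     (simp_all add: sig_def tau_def)

lemma En_lsm:
  assumes "\<forall>j<m. (\<forall>i<n. J i j \<ge> 0) \<or> (\<forall>i<n. J i j \<le> 0)"
  shows "En n m J h g S xS A + En n m J h g S xS B \<le> En n m J h g S xS (A\<union>B) + En n m J h g S xS (A\<inter>B)"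
proof -
  have "0 \<le> En n m J h g S xS (A\<union>B) + En n m J h g S xS (A\<inter>B) - En n m J h g S xS A - En n m J h g S xS B"
    unfolding En_four
  proof -
    have z1: "(\<Sum>i<n. h i * (sig S xS (A\<union>B) i + sig S xS (A\<inter>B) i - sig S xS A i - sig S xS B i)) = 0"
      by (intro sum.neutral ballI) (auto simp: sig_def)
    have z2: "(\<Sum>j<m. g j * sl n J j * (tau (A\<union>B) j + tau (A\<inter>B) j - tau A j - tau B j)) = 0"
      by (intro sum.neutral ballI) (auto simp: tau_def)
    have p: "0 \<le> (\<Sum>i<n. \<Sum>j<m. Kc n J i j * (sig S xS (A\<union>B) i * tau (A\<union>B) j + sig S xS (A\<inter>B) i * tau (A\<inter>B) j
        - sig S xS A i * tau A j - sig S xS B i * tau B j))"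
      using Kc_nonneg[OF assms] term_lsm by (intro sum_nonneg mult_nonneg_nonneg) auto
    show "0 \<le> (\<Sum>i<n. \<Sum>j<m. Kc n J i j * (sig S xS (A\<union>B) i * tau (A\<union>B) j + sig S xS (A\<inter>B) i * tau (A\<inter>B) j
        - sig S xS A i * tau A j - sig S xS B i * tau B j))
     + (\<Sum>i<n. h i * (sig S xS (A\<union>B) i + sig S xS (A\<inter>B) i - sig S xS A i - sig S xS B i))
     + (\<Sum>j<m. g j * sl n J j * (tau (A\<union>B) j + tau (A\<inter>B) j - tau A j - tau B j))"
      using p unfolding z1 z2 by simp
  qed
  thus ?thesis by simp
qed


lemma sum_if_const: "(\<Sum>j\<in>A. if P then f j else 0) = (if P then (\<Sum>j\<in>A. f j) else (0::real))"
  by (cases P) auto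

lemma En_obs_mod:
  assumes "i1 \<noteq> i2" "i1 \<notin> S" "i2 \<notin> S" "Inl i1 \<notin> B" "Inl i2 \<notin> B"
  shows "En n m J h g S xS (insert (Inl i1) (insert (Inl i2) B)) + En n m J h g S xS B
     - En n m J h g S xS (insert (Inl i1) B) - En n m J h g S xS (insert (Inl i2) B) = 0"
proof -
  have t: "tau (insert (Inl i) C) = tau C" for i C by (auto simp: tau_def)
  have sg: "sig S xS (insert (Inl i1) (insert (Inl i2) B)) i + sig S xS B i
      - sig S xS (insert (Inl i1) B) i - sig S xS (insert (Inl i2) B) i = 0" for i
    using assms by (cases "i \<in> S"; cases "Inl i \<in> B"; cases "i = i1"; cases "i = i2") (auto simp: sig_def)
  have a: "Kc n J i j * (sig S xS (insert (Inl i1) (insert (Inl i2) B)) i * tau B j + sig S xS B i * tau B j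
      - sig S xS (insert (Inl i1) B) i * tau B j - sig S xS (insert (Inl i2) B) i * tau B j) = 0" for i j
  proof -
    have "sig S xS (insert (Inl i1) (insert (Inl i2) B)) i * tau B j + sig S xS B i * tau B j
      - sig S xS (insert (Inl i1) B) i * tau B j - sig S xS (insert (Inl i2) B) i * tau B j
      = (sig S xS (insert (Inl i1) (insert (Inl i2) B)) i + sig S xS B i
      - sig S xS (insert (Inl i1) B) i - sig S xS (insert (Inl i2) B) i) * tau B j" by (simp add: algebra_simps)
    thus ?thesis using sg by simp
  qed
  show ?thesis unfolding En_four t a sg by simp
qed

lemma En_int:
  assumes "i0 < n" "j0 < m" "i0 \<notin> S" "Inl i0 \<notin> B" "Inr j0 \<notin> B"
  shows "En n m J h g S xS (insert (Inl i0) (insert (Inr j0) B)) + En n m J h g S xS B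
     - En n m J h g S xS (insert (Inl i0) B) - En n m J h g S xS (insert (Inr j0) B) = 4 * Kc n J i0 j0"
proof -
  have a: "(\<Sum>i<n. h i * (sig S xS (insert (Inl i0) (insert (Inr j0) B)) i + sig S xS B i
      - sig S xS (insert (Inl i0) B) i - sig S xS (insert (Inr j0) B) i)) = 0"
    using assms by (auto intro!: sum.neutral simp: sig_def)
  have b: "(\<Sum>j<m. g j * sl n J j * (tau (insert (Inl i0) (insert (Inr j0) B)) j + tau B j
      - tau (insert (Inl i0) B) j - tau (insert (Inr j0) B) j)) = 0"
    using assms by (auto intro!: sum.neutral simp: tau_def)
  have c: "Kc n J i j * (sig S xS (insert (Inl i0) (insert (Inr j0) B)) i * tau (insert (Inl i0) (insert (Inr j0) B)) j
        + sig S xS B i * tau B j - sig S xS (insert (Inl i0) B) i * tau (insert (Inl i0) B) j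
        - sig S xS (insert (Inr j0) B) i * tau (insert (Inr j0) B) j)
      = (if i = i0 then (if j = j0 then 4 * Kc n J i0 j0 else 0) else 0)" for i j
    using assms by (cases "i \<in> S"; cases "Inl i \<in> B"; cases "Inr j \<in> B")
      (auto simp: sig_def tau_def)
  show ?thesis unfolding En_four a b c using assms by (simp add: sum_if_const)
qed

lemma En_flip_obs:
  assumes "i0 < n" "i0 \<notin> S" "Inl i0 \<notin> B"
  shows "En n m J h g S xS (insert (Inl i0) B) - En n m J h g S xS B
     = 2 * (\<Sum>j<m. Kc n J i0 j * tau B j) + 2 * h i0"
proof -
  have a: "(\<Sum>i<n. h i * (sig S xS (insert (Inl i0) B) i - sig S xS B i)) = 2 * h i0"
  proof -
    have "(\<Sum>i<n. h i * (sig S xS (insert (Inl i0) B) i - sig S xS B i)) = (\<Sum>i<n. if i = i0 then 2 * h i0 else 0)"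
      using assms by (intro sum.cong) (auto simp: sig_def)
    thus ?thesis using assms by simp
  qed
  have b: "(\<Sum>j<m. g j * sl n J j * (tau (insert (Inl i0) B) j - tau B j)) = 0"
    by (auto intro!: sum.neutral simp: tau_def)
  have c: "(\<Sum>i<n. \<Sum>j<m. Kc n J i j * (sig S xS (insert (Inl i0) B) i * tau (insert (Inl i0) B) j - sig S xS B i * tau B j))
     = (\<Sum>i<n. if i = i0 then (\<Sum>j<m. 2 * (Kc n J i0 j * tau B j)) else 0)"
    using assms by (intro sum.cong) (auto simp: sig_def tau_def intro!: sum.neutral sum.cong)
  show ?thesis unfolding En_diff a b c using assms by (simp add: sum_distrib_left)
qed

lemma En_flip_lat:
  assumes "j0 < m" "Inr j0 \<notin> B"
  shows "En n m J h g S xS (insert (Inr j0) B) - En n m J h g S xS B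
     = 2 * (\<Sum>i<n. Kc n J i j0 * sig S xS B i) + 2 * g j0 * sl n J j0"
proof -
  have a: "(\<Sum>j<m. g j * sl n J j * (tau (insert (Inr j0) B) j - tau B j)) = 2 * g j0 * sl n J j0"
  proof -
    have "(\<Sum>j<m. g j * sl n J j * (tau (insert (Inr j0) B) j - tau B j)) = (\<Sum>j<m. if j = j0 then 2 * g j0 * sl n J j0 else 0)"
      using assms by (intro sum.cong) (auto simp: tau_def)
    thus ?thesis using assms by simp
  qed
  have b: "(\<Sum>i<n. h i * (sig S xS (insert (Inr j0) B) i - sig S xS B i)) = 0"
    by (auto intro!: sum.neutral simp: sig_def)
  have c: "(\<Sum>i<n. \<Sum>j<m. Kc n J i j * (sig S xS (insert (Inr j0) B) i * tau (insert (Inr j0) B) j - sig S xS B i * tau B j))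
     = (\<Sum>i<n. 2 * (Kc n J i j0 * sig S xS B i))"
  proof (intro sum.cong refl)
    fix i assume "i \<in> {..<n}"
    have "(\<Sum>j<m. Kc n J i j * (sig S xS (insert (Inr j0) B) i * tau (insert (Inr j0) B) j - sig S xS B i * tau B j))
      = (\<Sum>j<m. if j = j0 then 2 * (Kc n J i j0 * sig S xS B i) else 0)"
      using assms by (intro sum.cong) (auto simp: sig_def tau_def)
    thus "(\<Sum>j<m. Kc n J i j * (sig S xS (insert (Inr j0) B) i * tau (insert (Inr j0) B) j - sig S xS B i * tau B j))
      = 2 * (Kc n J i j0 * sig S xS B i)" using assms by simp
  qed
  show ?thesis unfolding En_diff a b c using assms by (simp add: sum_distrib_left)
qed


lemma flip_obs_bound:
  assumes lc: "locally_consistent n m J h g a l" and "i0 < n" "i0 \<notin> S" "Inl i0 \<notin> B"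
  shows "\<bar>En n m J h g S xS (insert (Inl i0) B) - En n m J h g S xS B\<bar> \<le> 2 * l"
proof -
  have "\<bar>(\<Sum>j<m. Kc n J i0 j * tau B j)\<bar> \<le> (\<Sum>j<m. \<bar>Kc n J i0 j * tau B j\<bar>)" by (rule sum_abs)
  also have "\<dots> = (\<Sum>j<m. \<bar>J i0 j\<bar>)" by (intro sum.cong) (auto simp: abs_mult abs_Kc tau_def)
  finally have "\<bar>(\<Sum>j<m. Kc n J i0 j * tau B j)\<bar> + \<bar>h i0\<bar> \<le> l"
    using lc assms(2) unfolding locally_consistent_def by fastforce
  thus ?thesis unfolding En_flip_obs[OF assms(2-4)] by linarith
qed

lemma flip_lat_bound:
  assumes lc: "locally_consistent n m J h g a l" and xs: "\<forall>i\<in>S. xS i \<in> {-1, 1}"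
    and "j0 < m" "Inr j0 \<notin> B"
  shows "\<bar>En n m J h g S xS (insert (Inr j0) B) - En n m J h g S xS B\<bar> \<le> 2 * l"
proof -
  have "\<bar>(\<Sum>i<n. Kc n J i j0 * sig S xS B i)\<bar> \<le> (\<Sum>i<n. \<bar>Kc n J i j0 * sig S xS B i\<bar>)" by (rule sum_abs)
  also have "\<dots> = (\<Sum>i<n. \<bar>J i j0\<bar>)" using xs by (intro sum.cong) (auto simp: abs_mult abs_Kc sig_def)
  finally have "\<bar>(\<Sum>i<n. Kc n J i j0 * sig S xS B i)\<bar> + \<bar>g j0 * sl n J j0\<bar> \<le> l"
    using lc assms(3) unfolding locally_consistent_def by (fastforce simp: abs_mult sl_def)
  thus ?thesis unfolding En_flip_lat[OF assms(3-4)] by linarith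
qed


definition xof :: "nat \<Rightarrow> nat set \<Rightarrow> (nat \<Rightarrow> real) \<Rightarrow> (nat + nat) set \<Rightarrow> nat \<Rightarrow> real" where
  "xof n S xS A = (\<lambda>i. if i < n then sig S xS A i else undefined)"
definition yof :: "nat \<Rightarrow> nat \<Rightarrow> (nat \<Rightarrow> nat \<Rightarrow> real) \<Rightarrow> (nat + nat) set \<Rightarrow> nat \<Rightarrow> real" where
  "yof n m J A = (\<lambda>j. if j < m then sl n J j * tau A j else undefined)"

lemma weight_En: "rbm_weight n m J h g (xof n S xS A) (yof n m J A) = exp (En n m J h g S xS A)"
  unfolding rbm_weight_def En_def
proof (intro arg_cong[where f=exp] arg_cong2[where f="(+)"])
  show "(\<Sum>i<n. \<Sum>j<m. xof n S xS A i * J i j * yof n m J A j) = (\<Sum>i<n. \<Sum>j<m. Kc n J i j * (sig S xS A i * tau A j))"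
    by (intro sum.cong refl) (simp add: xof_def yof_def Kc_def)
  show "(\<Sum>i<n. h i * xof n S xS A i) = (\<Sum>i<n. h i * sig S xS A i)"
    by (intro sum.cong refl) (simp add: xof_def)
  show "(\<Sum>j<m. g j * yof n m J A j) = (\<Sum>j<m. g j * sl n J j * tau A j)"
    by (intro sum.cong refl) (simp add: yof_def)
qed

lemma sl_pm: "sl n J j = 1 \<or> sl n J j = -1" unfolding sl_def by auto

lemma bij_conf:
  assumes S: "S \<subseteq> {..<n}" and xs: "\<forall>i\<in>S. xS i \<in> {-1, 1}"
  shows "bij_betw (\<lambda>A. (xof n S xS A, yof n m J A)) (Pow (Inl ` ({..<n} - S) \<union> Inr ` {..<m}))
     ({x\<in>spins n. \<forall>i\<in>S. x i = xS i} \<times> spins m)"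
  unfolding bij_betw_def
proof
  let ?I = "Inl ` ({..<n} - S) \<union> Inr ` {..<m}"
  show "inj_on (\<lambda>A. (xof n S xS A, yof n m J A)) (Pow ?I)"
  proof (rule inj_onI)
    fix A B assume A: "A \<in> Pow ?I" and B: "B \<in> Pow ?I"
      and e: "(xof n S xS A, yof n m J A) = (xof n S xS B, yof n m J B)"
    have ex: "xof n S xS A i = xof n S xS B i" and ey: "yof n m J A j = yof n m J B j" for i j
      using e by auto
    have mem: "z \<in> A \<longleftrightarrow> z \<in> B" if z: "z \<in> ?I" for z
    proof -
      from z consider i where "z = Inl i" "i < n" "i \<notin> S" | j where "z = Inr j" "j < m" by auto
      then show ?thesis
      proof cases
        case 1 then show ?thesis using ex[of i] by (auto simp: xof_def sig_def split: if_splits)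
      next
        case 2 then show ?thesis using ey[of j] sl_pm[of n J j] by (auto simp: yof_def tau_def split: if_splits)
      qed
    qed
    show "A = B" using A B mem by blast
  qed
  show "(\<lambda>A. (xof n S xS A, yof n m J A)) ` Pow ?I = {x\<in>spins n. \<forall>i\<in>S. x i = xS i} \<times> spins m"
  proof
    show "(\<lambda>A. (xof n S xS A, yof n m J A)) ` Pow ?I \<subseteq> {x\<in>spins n. \<forall>i\<in>S. x i = xS i} \<times> spins m"
    proof (rule image_subsetI)
      fix A assume "A \<in> Pow ?I"
      have "xof n S xS A \<in> spins n" unfolding spins_def
        using xs by (auto simp: PiE_iff xof_def sig_def extensional_def)
      moreover have "\<forall>i\<in>S. xof n S xS A i = xS i" using S by (auto simp: xof_def sig_def)
      moreover have "yof n m J A \<in> spins m" unfolding spins_def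
        using sl_pm by (auto simp: PiE_iff yof_def tau_def extensional_def)
      ultimately show "(xof n S xS A, yof n m J A) \<in> {x\<in>spins n. \<forall>i\<in>S. x i = xS i} \<times> spins m" by simp
    qed
    show "{x\<in>spins n. \<forall>i\<in>S. x i = xS i} \<times> spins m \<subseteq> (\<lambda>A. (xof n S xS A, yof n m J A)) ` Pow ?I"
    proof clarify
      fix x y assume x: "x \<in> spins n" and xS: "\<forall>i\<in>S. x i = xS i" and y: "y \<in> spins m"
      define A where "A = Inl ` {i\<in>{..<n} - S. x i = 1} \<union> Inr ` {j\<in>{..<m}. sl n J j * y j = 1}"
      have Asub: "A \<in> Pow ?I" unfolding A_def by auto
      have xv1: "x i \<in> {-1,1}" if "i < n" for i
        using x that unfolding spins_def by (auto simp: PiE_iff extensional_def)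
      have xv2: "x i = undefined" if "\<not> i < n" for i
        using x that unfolding spins_def by (auto simp: PiE_iff extensional_def)
      have yv1: "y j \<in> {-1,1}" if "j < m" for j
        using y that unfolding spins_def by (auto simp: PiE_iff extensional_def)
      have yv2: "y j = undefined" if "\<not> j < m" for j
        using y that unfolding spins_def by (auto simp: PiE_iff extensional_def)
      have "xof n S xS A = x"
      proof
        fix i show "xof n S xS A i = x i"
        proof (cases "i < n")
          case True
          then show ?thesis using xS xv1[OF True] unfolding xof_def sig_def A_def by auto
        next
          case False
          then show ?thesis using xv2 unfolding xof_def by auto
        qed
      qed
      moreover have "yof n m J A = y"
      proof
        fix j show "yof n m J A j = y j"
        proof (cases "j < m")
          case True
          then show ?thesis using yv1[OF True] sl_pm[of n J j] unfolding yof_def tau_def A_def by auto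
        next
          case False
          then show ?thesis using yv2 unfolding yof_def by auto
        qed
      qed
      ultimately show "(x, y) \<in> (\<lambda>A. (xof n S xS A, yof n m J A)) ` Pow ?I" using Asub by force
    qed
  qed
qed



lemma nu_cnd: "nu \<mu> k C > 0 \<Longrightarrow> nu \<mu> k C * cnd \<mu> k f C = \<mu> C * f C + \<mu> (insert k C) * f (insert k C)"
  unfolding cnd_def by simp

lemma expflip:
  fixes a b c :: real
  assumes "\<bar>a - b\<bar> \<le> c"
  shows "exp a \<le> exp c * exp b" "exp b \<le> exp c * exp a"
  using assms by (simp_all add: exp_add[symmetric])

lemma sum_conf:
  assumes S: "S \<subseteq> {..<n}" and xs: "\<forall>i\<in>S. xS i \<in> {-1, 1}"
  shows "(\<Sum>x\<in>{x\<in>spins n. \<forall>i\<in>S. x i = xS i}. \<Sum>y\<in>spins m. \<phi> x y)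
     = (\<Sum>A\<in>Pow (Inl ` ({..<n} - S) \<union> Inr ` {..<m}). \<phi> (xof n S xS A) (yof n m J A))"
proof -
  have "(\<Sum>x\<in>{x\<in>spins n. \<forall>i\<in>S. x i = xS i}. \<Sum>y\<in>spins m. \<phi> x y)
     = (\<Sum>p\<in>{x\<in>spins n. \<forall>i\<in>S. x i = xS i} \<times> spins m. case_prod \<phi> p)"
    by (rule sum.cartesian_product)
  also have "\<dots> = (\<Sum>A\<in>Pow (Inl ` ({..<n} - S) \<union> Inr ` {..<m}). case_prod \<phi> (xof n S xS A, yof n m J A))"
    by (rule sum.reindex_bij_betw[OF bij_conf[OF S xs], symmetric])
  finally show ?thesis by simp
qed

lemma Z_pos: "rbm_Z n m J h g > 0"
proof -
  have fin: "finite (spins k)" for k unfolding spins_def by (intro finite_PiE) auto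
  have ne: "spins k \<noteq> {}" for k unfolding spins_def by (simp add: PiE_eq_empty_iff)
  show ?thesis unfolding rbm_Z_def rbm_weight_def
    using fin ne by (intro sum_pos) auto
qed

lemma cond_exp_conf:
  assumes S: "S \<subseteq> {..<n}" and xs: "\<forall>i\<in>S. xS i \<in> {-1, 1}"
  shows "rbm_cond_exp n m J h g S xS f =
    (\<Sum>A\<in>Pow (Inl ` ({..<n} - S) \<union> Inr ` {..<m}). f (xof n S xS A) * exp (En n m J h g S xS A))
    / (\<Sum>A\<in>Pow (Inl ` ({..<n} - S) \<union> Inr ` {..<m}). exp (En n m J h g S xS A))"
proof -
  have Z: "rbm_Z n m J h g \<noteq> 0" using Z_pos[of n m J h g] by simp
  let ?X = "{x\<in>spins n. \<forall>i\<in>S. x i = xS i}"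
  have num: "(\<Sum>x\<in>?X. \<Sum>y\<in>spins m. f x * rbm_prob n m J h g x y)
     = (\<Sum>x\<in>?X. \<Sum>y\<in>spins m. f x * rbm_weight n m J h g x y) / rbm_Z n m J h g"
    unfolding rbm_prob_def sum_divide_distrib by simp
  have den: "(\<Sum>x\<in>?X. \<Sum>y\<in>spins m. rbm_prob n m J h g x y)
     = (\<Sum>x\<in>?X. \<Sum>y\<in>spins m. rbm_weight n m J h g x y) / rbm_Z n m J h g"
    unfolding rbm_prob_def sum_divide_distrib by simp
  have s1: "(\<Sum>x\<in>?X. \<Sum>y\<in>spins m. f x * rbm_weight n m J h g x y)
     = (\<Sum>A\<in>Pow (Inl ` ({..<n} - S) \<union> Inr ` {..<m}). f (xof n S xS A) * exp (En n m J h g S xS A))"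
    using sum_conf[OF S xs, of "\<lambda>x y. f x * rbm_weight n m J h g x y" m J] unfolding weight_En .
  have s2: "(\<Sum>x\<in>?X. \<Sum>y\<in>spins m. rbm_weight n m J h g x y)
     = (\<Sum>A\<in>Pow (Inl ` ({..<n} - S) \<union> Inr ` {..<m}). exp (En n m J h g S xS A))"
    using sum_conf[OF S xs, of "\<lambda>x y. rbm_weight n m J h g x y" m J] unfolding weight_En .
  show ?thesis unfolding rbm_cond_exp_def num den s1 s2 using Z by simp
qed


theorem lemma1:
  fixes n m :: nat and J :: "nat \<Rightarrow> nat \<Rightarrow> real" and h g :: "nat \<Rightarrow> real"
    and alpha lambda :: real and u v :: nat and S :: "nat set" and xS :: "nat \<Rightarrow> real"
  assumes "locally_consistent n m J h g alpha lambda"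
    and "alpha > 0"
    and "u < n"
    and "S \<subseteq> {..<n} - {u}"
    and "\<forall>i\<in>S. xS i \<in> {-1, 1}"
    and "v \<in> two_hop n m J u - (S \<union> {u})"
  shows "rbm_cond_cov n m J h g S xS u v \<ge> alpha^2 * exp (-12 * lambda)"
proof -
  note lc = assms(1)
  have Sn: "S \<subseteq> {..<n}" and uS: "u \<notin> S" using assms(4) by auto
  note xs = assms(5)
  have un: "u < n" by (rule assms(3))
  from assms(6) have vn: "v < n" and vS: "v \<notin> S" and vu: "v \<noteq> u"
    and "\<exists>j<m. J v j \<noteq> 0 \<and> J u j \<noteq> 0" unfolding two_hop_def by auto
  then obtain j0 where j0: "j0 < m" "J v j0 \<noteq> 0" "J u j0 \<noteq> 0" by blast
  have signs: "\<forall>j<m. (\<forall>i<n. J i j \<ge> 0) \<or> (\<forall>i<n. J i j \<le> 0)"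
    using lc unfolding locally_consistent_def by blast
  have Ju: "alpha \<le> \<bar>J u j0\<bar>" and Jv: "alpha \<le> \<bar>J v j0\<bar>"
    using lc j0 un vn unfolding locally_consistent_def by auto
  have Ku: "alpha \<le> Kc n J u j0" using Ju Kc_nonneg[OF signs un j0(1)] abs_Kc[of n J u j0] by simp
  have Kv: "alpha \<le> Kc n J v j0" using Jv Kc_nonneg[OF signs vn j0(1)] abs_Kc[of n J v j0] by simp
  have lam: "alpha \<le> lambda"
  proof -
    have "\<bar>J u j0\<bar> \<le> (\<Sum>j<m. \<bar>J u j\<bar>)" using j0(1) by (intro member_le_sum) auto
    moreover have "(\<Sum>j<m. \<bar>J u j\<bar>) + \<bar>h u\<bar> \<le> lambda" using lc un unfolding locally_consistent_def by auto
    ultimately show ?thesis using Ju by linarith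
  qed
  have l0: "lambda \<ge> 0" using lam assms(2) by linarith
  define E where "E = En n m J h g S xS"
  define \<mu> where "\<mu> = (\<lambda>A. exp (E A))"
  let ?u = "Inl u :: nat + nat" and ?v = "Inl v :: nat + nat" and ?j = "Inr j0 :: nat + nat"
  define I where "I = Inl ` ({..<n} - S) \<union> Inr ` {..<m}"
  define I0 where "I0 = I - {?u, ?v, ?j}"
  define I2 where "I2 = insert ?j I0"
  define I1 where "I1 = insert ?v I2"
  have finI: "finite I" unfolding I_def by auto
  have fin0: "finite I0" "finite I2" "finite I1" unfolding I0_def I2_def I1_def using finI by auto
  have II: "I = insert ?u I1" unfolding I1_def I2_def I0_def I_def using un vn uS vS j0 by auto
  have notin: "?u \<notin> I1" "?v \<notin> I2" "?j \<notin> I0" unfolding I1_def I2_def I0_def using vu by auto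
  define fu where "fu = (\<lambda>A. if ?u \<in> A then 1 else -1 :: real)"
  define fv where "fv = (\<lambda>A. if ?v \<in> A then 1 else -1 :: real)"
  define \<nu>1 where "\<nu>1 = nu \<mu> ?u"
  define F1 where "F1 = cnd \<mu> ?u fu"
  define G1 where "G1 = cnd \<mu> ?u fv"
  define \<nu>2 where "\<nu>2 = nu \<nu>1 ?v"
  define F2 where "F2 = cnd \<nu>1 ?v F1"
  define G2 where "G2 = cnd \<nu>1 ?v G1"
  define \<nu>3 where "\<nu>3 = nu \<nu>2 ?j"
  define F3 where "F3 = cnd \<nu>2 ?j F2"
  define G3 where "G3 = cnd \<nu>2 ?j G2"
  define T where "T = (\<Sum>A\<in>Pow I. \<mu> A)"
  have posmu: "posm \<mu> X" for X unfolding posm_def \<mu>_def by simp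
  have lsmmu: "lsm \<mu> X" for X unfolding lsm_def \<mu>_def E_def
    using En_lsm[OF signs] by (simp add: exp_add[symmetric])
  have mfu: "monof fu X" for X unfolding monof_def fu_def by auto
  have mfv: "monof fv X" for X unfolding monof_def fv_def by auto
  have p1: "posm \<nu>1 I1" unfolding \<nu>1_def by (rule nu_pos[OF posmu])
  have l1: "lsm \<nu>1 I1" unfolding \<nu>1_def by (rule lsm_nu[OF notin(1) posmu lsmmu])
  have mF1: "monof F1 I1" unfolding F1_def by (rule mono_cnd[OF notin(1) posmu lsmmu mfu])
  have mG1: "monof G1 I1" unfolding G1_def by (rule mono_cnd[OF notin(1) posmu lsmmu mfv])
  have c1: "cv \<nu>1 I1 F1 G1 \<le> cv \<mu> I fu fv"
    unfolding II \<nu>1_def F1_def G1_def by (rule cov_peel_ge[OF fin0(3) notin(1) posmu mfu mfv])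
  have p2: "posm \<nu>2 I2" unfolding \<nu>2_def by (rule nu_pos) (use p1 I1_def in simp)
  have l2: "lsm \<nu>2 I2" unfolding \<nu>2_def by (rule lsm_nu[OF notin(2)]) (use p1 l1 I1_def in simp_all)
  have mF2: "monof F2 I2" unfolding F2_def by (rule mono_cnd[OF notin(2)]) (use p1 l1 mF1 I1_def in simp_all)
  have mG2: "monof G2 I2" unfolding G2_def by (rule mono_cnd[OF notin(2)]) (use p1 l1 mG1 I1_def in simp_all)
  have c2: "cv \<nu>2 I2 F2 G2 \<le> cv \<nu>1 I1 F1 G1"
    unfolding I1_def \<nu>2_def F2_def G2_def
    by (rule cov_peel_ge[OF fin0(2) notin(2)]) (use p1 mF1 mG1 I1_def in simp_all)
  have p3: "posm \<nu>3 I0" unfolding \<nu>3_def by (rule nu_pos) (use p2 I2_def in simp)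
  have l3: "lsm \<nu>3 I0" unfolding \<nu>3_def by (rule lsm_nu[OF notin(3)]) (use p2 l2 I2_def in simp_all)
  have mF3: "monof F3 I0" unfolding F3_def by (rule mono_cnd[OF notin(3)]) (use p2 l2 mF2 I2_def in simp_all)
  have mG3: "monof G3 I0" unfolding G3_def by (rule mono_cnd[OF notin(3)]) (use p2 l2 mG2 I2_def in simp_all)
  have c3: "cv \<nu>2 I2 F2 G2 = cv \<nu>3 I0 F3 G3 + (\<Sum>A\<in>Pow I0. \<nu>3 A) *
     (\<Sum>A\<in>Pow I0. \<nu>2 A * \<nu>2 (insert ?j A) * (F2 (insert ?j A) - F2 A) * (G2 (insert ?j A) - G2 A) / \<nu>3 A)"
    unfolding I2_def \<nu>3_def F3_def G3_def
    by (rule cov_peel[OF fin0(1) notin(3)]) (use p2 I2_def in simp)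
  have c4: "0 \<le> cv \<nu>3 I0 F3 G3" by (rule fkg[OF fin0(1) p3 l3 mF3 mG3])
  have TT: "(\<Sum>A\<in>Pow I0. \<nu>3 A) = T"
  proof -
    have "T = (\<Sum>A\<in>Pow I1. \<nu>1 A)" unfolding T_def II \<nu>1_def nu_def by (rule sum_Pow_insert[OF fin0(3) notin(1)])
    also have "\<dots> = (\<Sum>A\<in>Pow I2. \<nu>2 A)" unfolding I1_def \<nu>2_def nu_def by (rule sum_Pow_insert[OF fin0(2) notin(2)])
    also have "\<dots> = (\<Sum>A\<in>Pow I0. \<nu>3 A)" unfolding I2_def \<nu>3_def nu_def by (rule sum_Pow_insert[OF fin0(1) notin(3)])
    finally show ?thesis by simp
  qed
  have nupos: "nu \<mu> k C > 0" for k C unfolding nu_def \<mu>_def by (simp add: add_pos_pos)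
  have mupos: "\<mu> C > 0" for C unfolding \<mu>_def by simp
  have nu1pos: "\<nu>1 C > 0" for C unfolding \<nu>1_def by (rule nupos)
  have e_nu2: "\<nu>2 C = \<mu> C + \<mu> (insert ?u C) + \<mu> (insert ?v C) + \<mu> (insert ?u (insert ?v C))" for C
    unfolding \<nu>2_def \<nu>1_def nu_def by simp
  have e_F2: "F2 C = (\<mu> (insert ?u C) + \<mu> (insert ?u (insert ?v C)) - \<mu> C - \<mu> (insert ?v C)) / \<nu>2 C"
    if "?u \<notin> C" "?v \<notin> C" for C
  proof -
    have a: "\<nu>1 C * F1 C = \<mu> (insert ?u C) - \<mu> C"
      unfolding \<nu>1_def F1_def nu_cnd[OF nupos] using that by (simp add: fu_def)
    have b: "\<nu>1 (insert ?v C) * F1 (insert ?v C) = \<mu> (insert ?u (insert ?v C)) - \<mu> (insert ?v C)"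
      unfolding \<nu>1_def F1_def nu_cnd[OF nupos] using that vu by (simp add: fu_def)
    have "F2 C = (\<nu>1 C * F1 C + \<nu>1 (insert ?v C) * F1 (insert ?v C)) / \<nu>2 C"
      unfolding F2_def cnd_def \<nu>2_def ..
    thus ?thesis unfolding a b by (simp add: algebra_simps)
  qed
  have e_G2: "G2 C = (\<mu> (insert ?v C) + \<mu> (insert ?u (insert ?v C)) - \<mu> C - \<mu> (insert ?u C)) / \<nu>2 C"
    if "?u \<notin> C" "?v \<notin> C" for C
  proof -
    have a: "\<nu>1 C * G1 C = - \<mu> C - \<mu> (insert ?u C)"
      unfolding \<nu>1_def G1_def nu_cnd[OF nupos] using that vu by (simp add: fv_def)
    have b: "\<nu>1 (insert ?v C) * G1 (insert ?v C) = \<mu> (insert ?v C) + \<mu> (insert ?u (insert ?v C))"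
      unfolding \<nu>1_def G1_def nu_cnd[OF nupos] using that vu by (simp add: fv_def)
    have "G2 C = (\<nu>1 C * G1 C + \<nu>1 (insert ?v C) * G1 (insert ?v C)) / \<nu>2 C"
      unfolding G2_def cnd_def \<nu>2_def ..
    thus ?thesis unfolding a b by (simp add: algebra_simps)
  qed
  define c where "c = alpha^2 * exp (-(12*lambda))"
  have loc: "c * \<nu>3 A \<le> \<nu>2 A * \<nu>2 (insert ?j A) * (F2 (insert ?j A) - F2 A) * (G2 (insert ?j A) - G2 A) / \<nu>3 A"
    if A: "A \<in> Pow I0" for A
  proof -
    have nA: "?u \<notin> A" "?v \<notin> A" "?j \<notin> A" using A unfolding I0_def by auto
    have mu_e: "\<mu> X * \<mu> Y = exp (E X + E Y)" for X Y unfolding \<mu>_def by (simp add: exp_add)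
    have f1a: "\<mu> (insert ?u (insert ?v A)) * \<mu> A = \<mu> (insert ?u A) * \<mu> (insert ?v A)"
    proof -
      have "E (insert ?u (insert ?v A)) + E A - E (insert ?u A) - E (insert ?v A) = 0"
        unfolding E_def by (rule En_obs_mod) (use vu uS vS nA in auto)
      thus ?thesis unfolding mu_e by (simp add: algebra_simps)
    qed
    have f1b: "\<mu> (insert ?u (insert ?v (insert ?j A))) * \<mu> (insert ?j A) = \<mu> (insert ?u (insert ?j A)) * \<mu> (insert ?v (insert ?j A))"
    proof -
      have "E (insert ?u (insert ?v (insert ?j A))) + E (insert ?j A) - E (insert ?u (insert ?j A)) - E (insert ?v (insert ?j A)) = 0"
        unfolding E_def by (rule En_obs_mod) (use vu uS vS nA in auto)
      thus ?thesis unfolding mu_e by (simp add: algebra_simps)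
    qed
    have iu: "exp (4*alpha) * (\<mu> (insert ?u A) * \<mu> (insert ?j A)) \<le> \<mu> (insert ?u (insert ?j A)) * \<mu> A"
    proof -
      have "E (insert ?u (insert ?j A)) + E A - E (insert ?u A) - E (insert ?j A) = 4 * Kc n J u j0"
        unfolding E_def by (rule En_int) (use un j0 uS nA in auto)
      hence "4*alpha + (E (insert ?u A) + E (insert ?j A)) \<le> E (insert ?u (insert ?j A)) + E A" using Ku by linarith
      thus ?thesis unfolding mu_e exp_add[symmetric] by simp
    qed
    have iv: "exp (4*alpha) * (\<mu> (insert ?v A) * \<mu> (insert ?j A)) \<le> \<mu> (insert ?v (insert ?j A)) * \<mu> A"
    proof -
      have "E (insert ?v (insert ?j A)) + E A - E (insert ?v A) - E (insert ?j A) = 4 * Kc n J v j0"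
        unfolding E_def by (rule En_int) (use vn j0 vS nA in auto)
      hence "4*alpha + (E (insert ?v A) + E (insert ?j A)) \<le> E (insert ?v (insert ?j A)) + E A" using Kv by linarith
      thus ?thesis unfolding mu_e exp_add[symmetric] by simp
    qed
    have fo: "\<bar>E (insert (Inl i) B) - E B\<bar> \<le> 2 * lambda" if "i < n" "i \<notin> S" "Inl i \<notin> B" for i B
      unfolding E_def by (rule flip_obs_bound[OF lc that])
    have fl: "\<bar>E (insert ?j B) - E B\<bar> \<le> 2 * lambda" if "?j \<notin> B" for B
      unfolding E_def by (rule flip_lat_bound[OF lc xs j0(1) that])
    have fu1: "\<mu> A \<le> exp (2*lambda) * \<mu> (insert ?u A)"
      unfolding \<mu>_def by (rule expflip(2)[OF fo]) (use un uS nA in auto)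
    have fu2: "\<mu> (insert ?u (insert ?j A)) \<le> exp (2*lambda) * \<mu> (insert ?j A)"
      unfolding \<mu>_def by (rule expflip(1)[OF fo]) (use un uS nA in auto)
    have fv1: "\<mu> A \<le> exp (2*lambda) * \<mu> (insert ?v A)"
      unfolding \<mu>_def by (rule expflip(2)[OF fo]) (use vn vS nA in auto)
    have fv2: "\<mu> (insert ?v (insert ?j A)) \<le> exp (2*lambda) * \<mu> (insert ?j A)"
      unfolding \<mu>_def by (rule expflip(1)[OF fo]) (use vn vS nA in auto)
    have ins1: "insert ?j (insert ?u A) = insert ?u (insert ?j A)" by auto
    have ins2: "insert ?j (insert ?v A) = insert ?v (insert ?j A)" by auto
    have ins3: "insert ?j (insert ?u (insert ?v A)) = insert ?u (insert ?v (insert ?j A))" by auto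
    have fc0: "\<bar>E (insert ?j A) - E A\<bar> \<le> 2 * lambda" by (rule fl) (use nA in auto)
    have fc1: "\<bar>E (insert ?u (insert ?j A)) - E (insert ?u A)\<bar> \<le> 2 * lambda"
      using fl[of "insert ?u A"] nA unfolding ins1 by auto
    have fc2: "\<bar>E (insert ?v (insert ?j A)) - E (insert ?v A)\<bar> \<le> 2 * lambda"
      using fl[of "insert ?v A"] nA unfolding ins2 by auto
    have fc3: "\<bar>E (insert ?u (insert ?v (insert ?j A))) - E (insert ?u (insert ?v A))\<bar> \<le> 2 * lambda"
      using fl[of "insert ?u (insert ?v A)"] nA unfolding ins3 by auto
    have mf: "\<mu> X \<le> exp (2*lambda) * \<mu> Y" "\<mu> Y \<le> exp (2*lambda) * \<mu> X"
      if "\<bar>E X - E Y\<bar> \<le> 2 * lambda" for X Y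
      unfolding \<mu>_def using expflip[OF that] by auto
    note LB = local_bound[of "\<mu> A" "\<mu> (insert ?u A)" "\<mu> (insert ?v A)" "\<mu> (insert ?u (insert ?v A))"
      "\<mu> (insert ?j A)" "\<mu> (insert ?u (insert ?j A))" "\<mu> (insert ?v (insert ?j A))" "\<mu> (insert ?u (insert ?v (insert ?j A)))"
      alpha lambda, OF mupos mupos mupos mupos mupos mupos mupos mupos assms(2) l0 f1a f1b iu iv fu1 fu2 fv1 fv2
      mf[OF fc0] mf[OF fc1] mf[OF fc2] mf[OF fc3]]
    have n3: "\<nu>3 A = \<nu>2 A + \<nu>2 (insert ?j A)" unfolding \<nu>3_def nu_def ..
    have nj: "?u \<notin> insert ?j A" "?v \<notin> insert ?j A" using nA by auto
    show ?thesis unfolding c_def n3 e_F2[OF nA(1,2)] e_G2[OF nA(1,2)] e_F2[OF nj] e_G2[OF nj] e_nu2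
      using LB by simp
  qed
  have Tpos: "T > 0" unfolding T_def using finI mupos by (intro sum_pos) auto
  have R3: "c * T \<le> (\<Sum>A\<in>Pow I0. \<nu>2 A * \<nu>2 (insert ?j A) * (F2 (insert ?j A) - F2 A) * (G2 (insert ?j A) - G2 A) / \<nu>3 A)"
  proof -
    have "c * T = (\<Sum>A\<in>Pow I0. c * \<nu>3 A)" unfolding TT[symmetric] sum_distrib_left ..
    also have "\<dots> \<le> (\<Sum>A\<in>Pow I0. \<nu>2 A * \<nu>2 (insert ?j A) * (F2 (insert ?j A) - F2 A) * (G2 (insert ?j A) - G2 A) / \<nu>3 A)"
      using loc by (rule sum_mono)
    finally show ?thesis .
  qed
  have cvb: "T * (c * T) \<le> cv \<mu> I fu fv"
  proof -
    have "T * (c * T) \<le> T * (\<Sum>A\<in>Pow I0. \<nu>2 A * \<nu>2 (insert ?j A) * (F2 (insert ?j A) - F2 A) * (G2 (insert ?j A) - G2 A) / \<nu>3 A)"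
      using R3 Tpos by (intro mult_left_mono) auto
    also have "\<dots> \<le> cv \<nu>2 I2 F2 G2" using c3 c4 TT by simp
    finally show ?thesis using c1 c2 by linarith
  qed
  have ce: "rbm_cond_exp n m J h g S xS \<phi> = (\<Sum>A\<in>Pow I. \<phi> (xof n S xS A) * \<mu> A) / T" for \<phi>
    using cond_exp_conf[OF Sn xs, of m J h g \<phi>] unfolding I_def[symmetric] \<mu>_def E_def T_def .
  have xu: "xof n S xS A u = fu A" and xv: "xof n S xS A v = fv A" for A
    using un uS vn vS by (simp_all add: xof_def sig_def fu_def fv_def)
  have cc: "rbm_cond_cov n m J h g S xS u v = cv \<mu> I fu fv / (T * T)"
    unfolding rbm_cond_cov_def ce xu xv cv_def T_def[symmetric] using Tpos
    by (simp add: field_simps)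
  have "c * (T * T) \<le> cv \<mu> I fu fv" using cvb by (simp add: algebra_simps)
  hence "c \<le> cv \<mu> I fu fv / (T * T)" using Tpos by (simp add: field_simps)
  thus ?thesis unfolding cc c_def by simp
qed


end
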